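(* Let $f:\mathbb{R}^n\to\mathbb{R}$ be bounded, $\lambda>0$, $h>0$, and let $x_k\in h\mathbb{Z}^n$ be a grid point. Then $$M^h_\lambda(f)(x_k)=g_m(x_k)\quad\text{for every integer } m\ge\Big\lfloor\tfrac1h\sqrt{\mathrm{osc}(f)/\lambda}\Big\rfloor+1,$$ where $g_m(x_k)=\inf\{f(x_k+rh)+\lambda h^2|r|^2:\ r\in\mathbb{Z}^n,\ |r|_\infty\le m\}$.
   Context: $M^h_\lambda(f)(x_k)=\inf\{f(x_k+rh)+\lambda h^2|r|^2:\ r\in\mathbb{Z}^n\}$ is the discrete lower Moreau envelope; $\mathrm{osc}(f)=\sup f-\inf f$; $\lfloor x\rfloor$ is the integer part of $x$; $|r|$ is the Euclidean norm and $|r|_\infty=\max_i|r_i|$. *)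

theory Defs
  imports "HOL-Analysis.Analysis"
begin

definition int_lattice :: "(real^'n) set" where
  "int_lattice = {r. \<forall>i. r $ i \<in> \<int>}"

definition sup_norm :: "real^'n \<Rightarrow> real" where
  "sup_norm r = Max (range (\<lambda>i. \<bar>r $ i\<bar>))"

definition disc_moreau :: "real \<Rightarrow> real \<Rightarrow> (real^'n \<Rightarrow> real) \<Rightarrow> real^'n \<Rightarrow> real" where
  "disc_moreau h lam f x =
     Inf ((\<lambda>r. f (x + h *\<^sub>R r) + lam * h\<^sup>2 * (norm r)\<^sup>2) ` int_lattice)"

definition disc_moreau_trunc :: "real \<Rightarrow> real \<Rightarrow> (real^'n \<Rightarrow> real) \<Rightarrow> int \<Rightarrow> real^'n \<Rightarrow> real" where
  "disc_moreau_trunc h lam f m x =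
     Inf ((\<lambda>r. f (x + h *\<^sub>R r) + lam * h\<^sup>2 * (norm r)\<^sup>2) `
          {r \<in> int_lattice. sup_norm r \<le> real_of_int m})"

definition osc :: "('a \<Rightarrow> real) \<Rightarrow> real" where
  "osc f = (SUP x. f x) - (INF x. f x)"

end

theory Submission
  imports Defs
begin

theorem proposition4p8:
  fixes f :: "real^'n \<Rightarrow> real" and lam h :: real and x :: "real^'n" and m :: int
  assumes "bounded (range f)"
    and "lam > 0" and "h > 0"
    and "\<exists>k \<in> int_lattice. x = h *\<^sub>R k"
    and "m \<ge> \<lfloor>(1 / h) * sqrt (osc f / lam)\<rfloor> + 1"
  shows "disc_moreau h lam f x = disc_moreau_trunc h lam f m x"
proof -
  define g where "g = (\<lambda>r::real^'n. f (x + h *\<^sub>R r) + lam * h\<^sup>2 * (norm r)\<^sup>2)"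
  define A where "A = g ` int_lattice"
  define B where "B = g ` {r \<in> int_lattice. sup_norm r \<le> real_of_int m}"
  have bb: "bdd_below (range f)" "bdd_above (range f)"
    using assms(1) bounded_imp_bdd_below bounded_imp_bdd_above by auto
  have lowf: "Inf (range f) \<le> f y" for y using bb by (simp add: cInf_lower)
  have upf: "f y \<le> Sup (range f)" for y using bb by (simp add: cSup_upper)
  have oscnn: "osc f \<ge> 0" using lowf[of x] upf[of x] by (simp add: osc_def)
  define s where "s = (1 / h) * sqrt (osc f / lam)"
  have s0: "s \<ge> 0" using oscnn assms(2,3) by (simp add: s_def)
  have ms: "real_of_int m > s" using assms(5) s_def
    by (smt (verit) floor_correct of_int_1 of_int_add of_int_le_iff)
  have s2: "lam * h\<^sup>2 * s\<^sup>2 = osc f"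
    using oscnn assms(2,3) by (simp add: s_def power_mult_distrib power_divide)
  have gnn: "g r \<ge> Inf (range f)" for r
    proof -
    have "lam * h\<^sup>2 * (norm r)\<^sup>2 \<ge> 0" using assms(2) by simp
    then show ?thesis using lowf[of "x + h *\<^sub>R r"] by (simp add: g_def)
  qed
  have BA: "B \<subseteq> A" by (auto simp: A_def B_def)
  have z: "(0::real^'n) \<in> {r \<in> int_lattice. sup_norm r \<le> real_of_int m}"
    using ms s0 by (simp add: int_lattice_def sup_norm_def)
  have g0: "g 0 = f x" by (simp add: g_def)
  have Bne: "B \<noteq> {}" using z by (auto simp: B_def)
  have Ane: "A \<noteq> {}" using Bne BA by auto
  have Abdd: "bdd_below A" unfolding A_def using gnn by (auto intro!: bdd_belowI)
  have Bbdd: "bdd_below B" using Abdd BA by (rule bdd_below_mono)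
  have key: "\<exists>b\<in>B. b \<le> g r" if r: "r \<in> int_lattice" for r
  proof (cases "sup_norm r \<le> real_of_int m")
    case True then show ?thesis using r by (auto simp: B_def)
  next
    case False
    have "sup_norm r \<in> range (\<lambda>i. \<bar>r $ i\<bar>)" unfolding sup_norm_def
      by (rule Max_in) auto
    then obtain i where i: "sup_norm r = \<bar>r $ i\<bar>" by auto
    have "norm r > s" using False i ms component_le_norm_cart[of r i] by linarith
    hence "(norm r)\<^sup>2 > s\<^sup>2" using s0 by (simp add: power_strict_mono)
    hence "lam * h\<^sup>2 * (norm r)\<^sup>2 > lam * h\<^sup>2 * s\<^sup>2" using assms(2,3) by simp
    hence "g r > Sup (range f)" using gnn[of r] s2 lowf[of "x + h *\<^sub>R r"]
      by (simp add: g_def osc_def)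
    hence "g 0 \<le> g r" using g0 upf[of x] by simp
    then show ?thesis using z by (auto simp: B_def)
  qed
  have "Inf A \<le> Inf B" using Abdd BA Bne by (simp add: cInf_superset_mono)
  moreover have "Inf B \<le> Inf A"
  proof (rule cInf_greatest[OF Ane])
    fix a assume "a \<in> A"
    then obtain r where "r \<in> int_lattice" "a = g r" by (auto simp: A_def)
    then obtain b where "b \<in> B" "b \<le> a" using key by blast
    then show "Inf B \<le> a" using Bbdd cInf_lower order_trans by blast
  qed
  ultimately have "Inf A = Inf B" by simp
  then show ?thesis by (simp add: disc_moreau_def disc_moreau_trunc_def A_def B_def g_def)
qed

end
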